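(* Let $(E,\mu)$ and $(F,\nu)$ be fuzzy Riesz spaces and $T:E\rightarrow F$ a fuzzy Riesz homomorphism. (1) If $B$ is a fuzzy ideal in $E$, then $T(B)$ is a fuzzy ideal in $T(E)$. (2) If $B_1$ and $B_2$ are fuzzy ideals in $E$, then $T(B_1\cap B_2)=T(B_1)\cap T(B_2)$.
   Context: A fuzzy order on a real vector space $E$ is a map $\mu:E\times E\to[0,1]$ with $\mu(x,x)=1$; $\mu(x,y)+\mu(y,x)>1$ implies $x=y$; and $\mu(x,z)\ge\sup_{y}\min(\mu(x,y),\mu(y,z))$. Write $x\le y$ for $\mu(x,y)>\frac12$; suprema/infima are taken with respect to this relation. $(E,\mu)$ is a fuzzy ordered linear space if $\mu(x_1,x_2)>\frac12$ implies $\mu(x_1,x_2)\le\mu(x_1+x,x_2+x)$ for all $x$ and $\mu(x_1,x_2)\le\mu(\alpha x_1,\alpha x_2)$ for all $\alpha>0$; it is a fuzzy Riesz space if $x\vee y=\sup\{x,y\}$ and $x\wedge y=\inf\{x,y\}$ exist for all $x,y$. $|x|=x\vee(-x)$. A fuzzy Riesz homomorphism is a linear map with $T(x\vee y)=Tx\vee Ty$; its range $T(E)$ is a fuzzy Riesz subspace of $F$ and is regarded as a fuzzy Riesz space with the restricted fuzzy order. A subset $A$ is fuzzy solid if $\mu(|x|,|y|)>\frac12$ and $y\in A$ imply $x\in A$; a fuzzy ideal is a fuzzy solid vector subspace. *)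

theory Defs
  imports "HOL-Analysis.Analysis"
begin

definition fuzzy_order :: "('a \<Rightarrow> 'a \<Rightarrow> real) \<Rightarrow> bool" where
  "fuzzy_order \<mu> \<longleftrightarrow>
     (\<forall>x y. 0 \<le> \<mu> x y \<and> \<mu> x y \<le> 1) \<and>
     (\<forall>x. \<mu> x x = 1) \<and>
     (\<forall>x y. \<mu> x y + \<mu> y x > 1 \<longrightarrow> x = y) \<and>
     (\<forall>x z. \<mu> x z \<ge> (SUP y. min (\<mu> x y) (\<mu> y z)))"

definition fle :: "('a \<Rightarrow> 'a \<Rightarrow> real) \<Rightarrow> 'a \<Rightarrow> 'a \<Rightarrow> bool" where
  "fle \<mu> x y \<longleftrightarrow> \<mu> x y > 1/2"

definition is_lub_on :: "'a set \<Rightarrow> ('a \<Rightarrow> 'a \<Rightarrow> real) \<Rightarrow> 'a set \<Rightarrow> 'a \<Rightarrow> bool" where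
  "is_lub_on S \<mu> A s \<longleftrightarrow> s \<in> S \<and> (\<forall>a\<in>A. fle \<mu> a s) \<and>
     (\<forall>u\<in>S. (\<forall>a\<in>A. fle \<mu> a u) \<longrightarrow> fle \<mu> s u)"

definition is_glb_on :: "'a set \<Rightarrow> ('a \<Rightarrow> 'a \<Rightarrow> real) \<Rightarrow> 'a set \<Rightarrow> 'a \<Rightarrow> bool" where
  "is_glb_on S \<mu> A s \<longleftrightarrow> s \<in> S \<and> (\<forall>a\<in>A. fle \<mu> s a) \<and>
     (\<forall>u\<in>S. (\<forall>a\<in>A. fle \<mu> u a) \<longrightarrow> fle \<mu> u s)"

definition fjoin_on :: "'a set \<Rightarrow> ('a \<Rightarrow> 'a \<Rightarrow> real) \<Rightarrow> 'a \<Rightarrow> 'a \<Rightarrow> 'a" where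
  "fjoin_on S \<mu> x y = (THE s. is_lub_on S \<mu> {x, y} s)"

definition fmeet_on :: "'a set \<Rightarrow> ('a \<Rightarrow> 'a \<Rightarrow> real) \<Rightarrow> 'a \<Rightarrow> 'a \<Rightarrow> 'a" where
  "fmeet_on S \<mu> x y = (THE s. is_glb_on S \<mu> {x, y} s)"

definition fabs_on :: "'a set \<Rightarrow> ('a \<Rightarrow> 'a \<Rightarrow> real) \<Rightarrow> 'a \<Rightarrow> 'a::real_vector" where
  "fabs_on S \<mu> x = fjoin_on S \<mu> x (- x)"

abbreviation fjoin :: "('a \<Rightarrow> 'a \<Rightarrow> real) \<Rightarrow> 'a \<Rightarrow> 'a \<Rightarrow> 'a" where
  "fjoin \<mu> \<equiv> fjoin_on UNIV \<mu>"

definition fuzzy_ordered_linear_space :: "('a::real_vector \<Rightarrow> 'a \<Rightarrow> real) \<Rightarrow> bool" where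
  "fuzzy_ordered_linear_space \<mu> \<longleftrightarrow> fuzzy_order \<mu> \<and>
     (\<forall>x1 x2. \<mu> x1 x2 > 1/2 \<longrightarrow>
        (\<forall>x. \<mu> x1 x2 \<le> \<mu> (x1 + x) (x2 + x)) \<and>
        (\<forall>\<alpha>::real. \<alpha> > 0 \<longrightarrow> \<mu> x1 x2 \<le> \<mu> (\<alpha> *\<^sub>R x1) (\<alpha> *\<^sub>R x2)))"

definition fuzzy_riesz_space :: "('a::real_vector \<Rightarrow> 'a \<Rightarrow> real) \<Rightarrow> bool" where
  "fuzzy_riesz_space \<mu> \<longleftrightarrow> fuzzy_ordered_linear_space \<mu> \<and>
     (\<forall>x y. (\<exists>s. is_lub_on UNIV \<mu> {x, y} s) \<and> (\<exists>i. is_glb_on UNIV \<mu> {x, y} i))"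

definition fuzzy_riesz_hom ::
  "('a::real_vector \<Rightarrow> 'a \<Rightarrow> real) \<Rightarrow> ('b::real_vector \<Rightarrow> 'b \<Rightarrow> real) \<Rightarrow> ('a \<Rightarrow> 'b) \<Rightarrow> bool" where
  "fuzzy_riesz_hom \<mu> \<nu> T \<longleftrightarrow> linear T \<and> (\<forall>x y. T (fjoin \<mu> x y) = fjoin \<nu> (T x) (T y))"

text \<open>Fuzzy solid set / fuzzy ideal inside a carrier S (with absolute value
  computed in S with the restricted order). For S = UNIV these are the usual notions.\<close>
definition fuzzy_solid_on :: "'a::real_vector set \<Rightarrow> ('a \<Rightarrow> 'a \<Rightarrow> real) \<Rightarrow> 'a set \<Rightarrow> bool" where
  "fuzzy_solid_on S \<mu> A \<longleftrightarrow> A \<subseteq> S \<and>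
     (\<forall>x\<in>S. \<forall>y\<in>A. \<mu> (fabs_on S \<mu> x) (fabs_on S \<mu> y) > 1/2 \<longrightarrow> x \<in> A)"

definition fuzzy_ideal_on :: "'a::real_vector set \<Rightarrow> ('a \<Rightarrow> 'a \<Rightarrow> real) \<Rightarrow> 'a set \<Rightarrow> bool" where
  "fuzzy_ideal_on S \<mu> A \<longleftrightarrow> subspace A \<and> fuzzy_solid_on S \<mu> A"

abbreviation fuzzy_ideal :: "('a::real_vector \<Rightarrow> 'a \<Rightarrow> real) \<Rightarrow> 'a set \<Rightarrow> bool" where
  "fuzzy_ideal \<mu> A \<equiv> fuzzy_ideal_on UNIV \<mu> A"

end

theory Submission
  imports Defs
begin

lemma fle_refl: "fuzzy_order \<mu> \<Longrightarrow> fle \<mu> x x"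
  by (simp add: fuzzy_order_def fle_def)

lemma fle_antisym: "fuzzy_order \<mu> \<Longrightarrow> fle \<mu> x y \<Longrightarrow> fle \<mu> y x \<Longrightarrow> x = y"
  unfolding fuzzy_order_def fle_def by force

lemma fle_trans:
  assumes fo: "fuzzy_order \<mu>" and "fle \<mu> x y" "fle \<mu> y z"
  shows "fle \<mu> x z"
proof -
  have le1: "\<And>a b. \<mu> a b \<le> 1" using fo unfolding fuzzy_order_def by blast
  have bd: "bdd_above (range (\<lambda>y. min (\<mu> x y) (\<mu> y z)))"
  proof (rule bdd_aboveI[where M=1])
    fix t assume "t \<in> range (\<lambda>y. min (\<mu> x y) (\<mu> y z))"
    then obtain w where "t = min (\<mu> x w) (\<mu> w z)" by blast
    thus "t \<le> 1" using le1[of x w] by linarith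
  qed
  have "min (\<mu> x y) (\<mu> y z) \<le> (SUP y. min (\<mu> x y) (\<mu> y z))"
    by (rule cSUP_upper[OF _ bd]) simp
  also have "\<dots> \<le> \<mu> x z" using fo unfolding fuzzy_order_def by simp
  finally show ?thesis using assms unfolding fle_def by linarith
qed

lemma fols_fo: "fuzzy_ordered_linear_space \<mu> \<Longrightarrow> fuzzy_order \<mu>"
  by (simp add: fuzzy_ordered_linear_space_def)

lemma fle_add:
  assumes "fuzzy_ordered_linear_space \<mu>" "fle \<mu> x y"
  shows "fle \<mu> (x + z) (y + z)"
proof -
  have "\<mu> x y > 1/2" using assms(2) by (simp add: fle_def)
  hence "\<mu> x y \<le> \<mu> (x + z) (y + z)" using assms(1) unfolding fuzzy_ordered_linear_space_def by blast
  thus ?thesis using \<open>\<mu> x y > 1/2\<close> by (simp add: fle_def)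
qed

lemma fle_scale:
  assumes "fuzzy_ordered_linear_space \<mu>" "fle \<mu> x y" "(a::real) > 0"
  shows "fle \<mu> (a *\<^sub>R x) (a *\<^sub>R y)"
proof -
  have "\<mu> x y > 1/2" using assms(2) by (simp add: fle_def)
  hence "\<mu> x y \<le> \<mu> (a *\<^sub>R x) (a *\<^sub>R y)" using assms(1,3) unfolding fuzzy_ordered_linear_space_def by blast
  thus ?thesis using \<open>\<mu> x y > 1/2\<close> by (simp add: fle_def)
qed

lemma fle_neg:
  assumes "fuzzy_ordered_linear_space \<mu>" "fle \<mu> x y"
  shows "fle \<mu> (- y) (- x)"
proof -
  have "fle \<mu> (x + (- x - y)) (y + (- x - y))" by (rule fle_add[OF assms])
  thus ?thesis by (simp add: algebra_simps)
qed

lemma fle_neg_iff: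
  assumes "fuzzy_ordered_linear_space \<mu>" "fle \<mu> (- x) y"
  shows "fle \<mu> (- y) x"
  using fle_neg[OF assms] by simp

lemma fle_add2:
  assumes f: "fuzzy_ordered_linear_space \<mu>" "fle \<mu> x y" "fle \<mu> u v"
  shows "fle \<mu> (x + u) (y + v)"
proof -
  have "fle \<mu> (x + u) (y + u)" by (rule fle_add[OF f(1,2)])
  moreover have "fle \<mu> (u + y) (v + y)" by (rule fle_add[OF f(1,3)])
  hence "fle \<mu> (y + u) (y + v)" by (simp add: add.commute)
  ultimately show ?thesis by (rule fle_trans[OF fols_fo[OF f(1)]])
qed

lemma lub_unique:
  assumes "fuzzy_order \<mu>" "is_lub_on S \<mu> A s" "is_lub_on S \<mu> A t"
  shows "s = t"
proof -
  have "fle \<mu> s t" using assms(2,3) unfolding is_lub_on_def by blast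
  moreover have "fle \<mu> t s" using assms(2,3) unfolding is_lub_on_def by blast
  ultimately show ?thesis by (rule fle_antisym[OF assms(1)])
qed

lemma fjoin_on_eq:
  assumes "fuzzy_order \<mu>" "is_lub_on S \<mu> {x, y} s"
  shows "fjoin_on S \<mu> x y = s"
  unfolding fjoin_on_def
  using assms(2) lub_unique[OF assms(1) _ assms(2)] by (rule the_equality)

lemma frs_lub:
  assumes "fuzzy_riesz_space \<mu>"
  shows "is_lub_on UNIV \<mu> {x, y} (fjoin \<mu> x y)"
proof -
  have fo: "fuzzy_order \<mu>" using assms by (simp add: fuzzy_riesz_space_def fuzzy_ordered_linear_space_def)
  obtain s where s: "is_lub_on UNIV \<mu> {x, y} s" using assms unfolding fuzzy_riesz_space_def by blast
  show ?thesis using fjoin_on_eq[OF fo s] s by simp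
qed

lemma frs_fols: "fuzzy_riesz_space \<mu> \<Longrightarrow> fuzzy_ordered_linear_space \<mu>"
  by (simp add: fuzzy_riesz_space_def)

lemma join_ub1: "fuzzy_riesz_space \<mu> \<Longrightarrow> fle \<mu> x (fjoin \<mu> x y)"
  using frs_lub unfolding is_lub_on_def by blast
lemma join_ub2: "fuzzy_riesz_space \<mu> \<Longrightarrow> fle \<mu> y (fjoin \<mu> x y)"
  using frs_lub unfolding is_lub_on_def by blast
lemma join_least: "fuzzy_riesz_space \<mu> \<Longrightarrow> fle \<mu> x u \<Longrightarrow> fle \<mu> y u \<Longrightarrow> fle \<mu> (fjoin \<mu> x y) u"
  using frs_lub unfolding is_lub_on_def by blast

lemma join_eq_right:
  assumes "fuzzy_riesz_space \<mu>" "fle \<mu> x y"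
  shows "fjoin \<mu> x y = y"
  using fle_antisym[OF fols_fo[OF frs_fols[OF assms(1)]]] join_least[OF assms(1) assms(2)]
    fle_refl[OF fols_fo[OF frs_fols[OF assms(1)]]] join_ub2[OF assms(1)] by blast

lemma join_eq_left:
  assumes "fuzzy_riesz_space \<mu>" "fle \<mu> y x"
  shows "fjoin \<mu> x y = x"
  using fle_antisym[OF fols_fo[OF frs_fols[OF assms(1)]]] join_least[OF assms(1) _ assms(2)]
    fle_refl[OF fols_fo[OF frs_fols[OF assms(1)]]] join_ub1[OF assms(1)] by blast

lemma abs_ge0:
  assumes r: "fuzzy_riesz_space \<mu>"
  shows "fle \<mu> 0 (fjoin \<mu> y (- y))"
proof -
  let ?a = "fjoin \<mu> y (- y)"
  have f: "fuzzy_ordered_linear_space \<mu>" using r by (rule frs_fols)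
  have "fle \<mu> (y + - y) (?a + ?a)" by (rule fle_add2[OF f join_ub1[OF r] join_ub2[OF r]])
  hence "fle \<mu> ((1/2) *\<^sub>R 0) ((1/2) *\<^sub>R (?a + ?a))" by (intro fle_scale[OF f]) auto
  thus ?thesis by (simp add: scaleR_add_right[symmetric])
qed

lemma abs_range:
  assumes r: "fuzzy_riesz_space \<mu>" "fuzzy_riesz_space \<nu>" and h: "fuzzy_riesz_hom \<mu> \<nu> T"
  shows "fabs_on (range T) \<nu> (T x) = T (fabs_on UNIV \<mu> x)"
proof -
  have lin: "linear T" and hj: "\<And>x y. T (fjoin \<mu> x y) = fjoin \<nu> (T x) (T y)"
    using h by (auto simp: fuzzy_riesz_hom_def)
  have l: "is_lub_on UNIV \<nu> {T x, T (- x)} (T (fjoin \<mu> x (- x)))"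
    using frs_lub[OF r(2)] hj by simp
  have "is_lub_on (range T) \<nu> {T x, - T x} (T (fjoin \<mu> x (- x)))"
    using l linear_neg[OF lin] unfolding is_lub_on_def by auto
  thus ?thesis unfolding fabs_on_def
    by (intro fjoin_on_eq fols_fo frs_fols r)
qed


lemma clamp_E:
  fixes \<mu> :: "'a::real_vector \<Rightarrow> 'a \<Rightarrow> real" and x y :: 'a
  assumes r: "fuzzy_riesz_space \<mu>"
  defines "c \<equiv> fjoin \<mu> y (- y)"
  defines "w \<equiv> fjoin \<mu> (- fjoin \<mu> (- x) (- c)) (- c)"
  shows "fle \<mu> (fjoin \<mu> w (- w)) c" "fle \<mu> (fjoin \<mu> w (- w)) (fjoin \<mu> x (- x))"
proof -
  have f: "fuzzy_ordered_linear_space \<mu>" by (rule frs_fols[OF r])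
  have fo: "fuzzy_order \<mu>" by (rule fols_fo[OF f])
  note tr = fle_trans[OF fo]
  define m where "m = - fjoin \<mu> (- x) (- c)"
  define e where "e = fjoin \<mu> x (- x)"
  have yc: "fle \<mu> y c" unfolding c_def by (rule join_ub1[OF r])
  have myc: "fle \<mu> (- y) c" unfolding c_def by (rule join_ub2[OF r])
  have mcy: "fle \<mu> (- c) y" by (rule fle_neg_iff[OF f myc])
  have cc: "fle \<mu> (- c) c" by (rule tr[OF mcy yc])
  have mc: "fle \<mu> m c"
    using fle_neg[OF f join_ub2[OF r, of "- c" "- x"]] unfolding m_def by simp
  have wc: "fle \<mu> w c" unfolding w_def m_def[symmetric] by (rule join_least[OF r mc cc])
  have cw: "fle \<mu> (- c) w" unfolding w_def by (rule join_ub2[OF r])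
  have mwc: "fle \<mu> (- w) c" using fle_neg[OF f cw] by simp
  show "fle \<mu> (fjoin \<mu> w (- w)) c" by (rule join_least[OF r wc mwc])
  have c0: "fle \<mu> 0 c" unfolding c_def by (rule abs_ge0[OF r])
  have e0: "fle \<mu> 0 e" unfolding e_def by (rule abs_ge0[OF r])
  have mc0: "fle \<mu> (- c) 0" using fle_neg[OF f c0] by simp
  have ce: "fle \<mu> (- c) e" by (rule tr[OF mc0 e0])
  have xe: "fle \<mu> (- x) e" unfolding e_def by (rule join_ub2[OF r])
  have Je: "fle \<mu> (fjoin \<mu> (- x) (- c)) e" by (rule join_least[OF r xe ce])
  have em: "fle \<mu> (- e) m" unfolding m_def by (rule fle_neg[OF f Je])
  have xe2: "fle \<mu> x e" unfolding e_def by (rule join_ub1[OF r])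
  have ex: "fle \<mu> (- e) (- x)" by (rule fle_neg[OF f xe2])
  have eJ: "fle \<mu> (- e) (fjoin \<mu> (- x) (- c))" by (rule tr[OF ex join_ub1[OF r]])
  have me: "fle \<mu> m e" unfolding m_def using fle_neg[OF f eJ] by simp
  have we: "fle \<mu> w e" unfolding w_def m_def[symmetric] by (rule join_least[OF r me ce])
  have mw: "fle \<mu> m w" unfolding w_def m_def[symmetric] by (rule join_ub1[OF r])
  have ew: "fle \<mu> (- e) w" by (rule tr[OF em mw])
  have mwe: "fle \<mu> (- w) e" by (rule fle_neg_iff[OF f ew])
  show "fle \<mu> (fjoin \<mu> w (- w)) (fjoin \<mu> x (- x))" unfolding e_def[symmetric]
    by (rule join_least[OF r we mwe])
qed

lemma clamp_T:
  assumes r: "fuzzy_riesz_space \<mu>" "fuzzy_riesz_space \<nu>" and h: "fuzzy_riesz_hom \<mu> \<nu> T"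
    and a1: "fle \<nu> (T x) (T c)" and a2: "fle \<nu> (- T x) (T c)"
  shows "T (fjoin \<mu> (- fjoin \<mu> (- x) (- c)) (- c)) = T x"
proof -
  have lin: "linear T" and hj: "\<And>x y. T (fjoin \<mu> x y) = fjoin \<nu> (T x) (T y)"
    using h by (auto simp: fuzzy_riesz_hom_def)
  have f: "fuzzy_ordered_linear_space \<nu>" by (rule frs_fols[OF r(2)])
  have "T (fjoin \<mu> (- fjoin \<mu> (- x) (- c)) (- c)) =
        fjoin \<nu> (- fjoin \<nu> (- T x) (- T c)) (- T c)"
    by (simp add: hj linear_neg[OF lin])
  also have "fjoin \<nu> (- T x) (- T c) = - T x"
    by (rule join_eq_left[OF r(2) fle_neg[OF f a1]])
  also have "fjoin \<nu> (- (- T x)) (- T c) = T x"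
    using join_eq_left[OF r(2) fle_neg_iff[OF f a2]] by simp
  finally show ?thesis .
qed

theorem theorem2p4:
  fixes \<mu> :: "'a::real_vector \<Rightarrow> 'a \<Rightarrow> real"
    and \<nu> :: "'b::real_vector \<Rightarrow> 'b \<Rightarrow> real"
    and T :: "'a \<Rightarrow> 'b"
  assumes "fuzzy_riesz_space \<mu>" and "fuzzy_riesz_space \<nu>"
    and "fuzzy_riesz_hom \<mu> \<nu> T"
  shows "(\<forall>B. fuzzy_ideal \<mu> B \<longrightarrow> fuzzy_ideal_on (range T) \<nu> (T ` B)) \<and>
         (\<forall>B1 B2. fuzzy_ideal \<mu> B1 \<longrightarrow> fuzzy_ideal \<mu> B2 \<longrightarrow>
             T ` (B1 \<inter> B2) = T ` B1 \<inter> T ` B2)"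
proof -
  note r = assms(1,2) and h = assms(3)
  have lin: "linear T" and hj: "\<And>x y. T (fjoin \<mu> x y) = fjoin \<nu> (T x) (T y)"
    using h by (auto simp: fuzzy_riesz_hom_def)
  have fo: "fuzzy_order \<nu>" by (rule fols_fo[OF frs_fols[OF r(2)]])
  have absT: "\<And>x. T (fjoin \<mu> x (- x)) = fjoin \<nu> (T x) (- T x)"
    by (simp add: hj linear_neg[OF lin])
  define W where "W = (\<lambda>x y. fjoin \<mu> (- fjoin \<mu> (- x) (- fjoin \<mu> y (- y))) (- fjoin \<mu> y (- y)))"
  have memB: "W x y \<in> B" if "fuzzy_ideal \<mu> B" "y \<in> B" for B x y
  proof -
    have "fle \<mu> (fjoin \<mu> (W x y) (- W x y)) (fjoin \<mu> y (- y))"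
      unfolding W_def by (rule clamp_E(1)[OF r(1)])
    thus ?thesis using that unfolding fuzzy_ideal_on_def fuzzy_solid_on_def fabs_on_def fle_def
      by blast
  qed
  have TW: "T (W x y) = T x" if "fle \<nu> (fjoin \<nu> (T x) (- T x)) (fjoin \<nu> (T y) (- T y))" for x y
  proof -
    have a1: "fle \<nu> (T x) (T (fjoin \<mu> y (- y)))"
      unfolding absT by (rule fle_trans[OF fo join_ub1[OF r(2)] that])
    have a2: "fle \<nu> (- T x) (T (fjoin \<mu> y (- y)))"
      unfolding absT by (rule fle_trans[OF fo join_ub2[OF r(2)] that])
    show ?thesis unfolding W_def by (rule clamp_T[OF r h a1 a2])
  qed
  have P1: "fuzzy_ideal_on (range T) \<nu> (T ` B)" if B: "fuzzy_ideal \<mu> B" for B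
  proof -
    have sub: "subspace (T ` B)"
      using B lin by (auto simp: fuzzy_ideal_on_def intro: linear_subspace_image)
    have "x' \<in> T ` B" if hx: "x' \<in> range T" "y' \<in> T ` B"
      "\<nu> (fabs_on (range T) \<nu> x') (fabs_on (range T) \<nu> y') > 1/2" for x' y'
    proof -
      obtain x where x: "x' = T x" using hx(1) by blast
      obtain y where y: "y \<in> B" "y' = T y" using hx(2) by blast
      have "fle \<nu> (T (fabs_on UNIV \<mu> x)) (T (fabs_on UNIV \<mu> y))"
        using hx(3) unfolding x y abs_range[OF r h] fle_def by simp
      hence "fle \<nu> (fjoin \<nu> (T x) (- T x)) (fjoin \<nu> (T y) (- T y))"
        unfolding fabs_on_def absT .
      hence "T (W x y) = x'" using TW x by simp
      moreover have "W x y \<in> B" by (rule memB[OF B y(1)])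
      ultimately show ?thesis by blast
    qed
    thus ?thesis using sub unfolding fuzzy_ideal_on_def fuzzy_solid_on_def by blast
  qed
  have P2: "T ` (B1 \<inter> B2) = T ` B1 \<inter> T ` B2"
    if B1: "fuzzy_ideal \<mu> B1" and B2: "fuzzy_ideal \<mu> B2" for B1 B2
  proof
    show "T ` (B1 \<inter> B2) \<subseteq> T ` B1 \<inter> T ` B2" by blast
    show "T ` B1 \<inter> T ` B2 \<subseteq> T ` (B1 \<inter> B2)"
    proof
      fix z assume "z \<in> T ` B1 \<inter> T ` B2"
      then obtain b1 b2 where b: "b1 \<in> B1" "b2 \<in> B2" "z = T b1" "z = T b2" by blast
      have "fle \<nu> (fjoin \<nu> (T b1) (- T b1)) (fjoin \<nu> (T b2) (- T b2))"
        using b(3,4) fle_refl[OF fo] by simp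
      hence Tw: "T (W b1 b2) = z" using TW b(3) by simp
      have w2: "W b1 b2 \<in> B2" by (rule memB[OF B2 b(2)])
      have "fle \<mu> (fjoin \<mu> (W b1 b2) (- W b1 b2)) (fjoin \<mu> b1 (- b1))"
        unfolding W_def by (rule clamp_E(2)[OF r(1)])
      hence w1: "W b1 b2 \<in> B1" using B1 b(1)
        unfolding fuzzy_ideal_on_def fuzzy_solid_on_def fabs_on_def fle_def by blast
      show "z \<in> T ` (B1 \<inter> B2)" using Tw w1 w2 by blast
    qed
  qed
  show ?thesis using P1 P2 by blast
qed

end
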